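(* Let $\Delta$ be a positive integer and let $f\colon\mathbb{N}\to\mathbb{R}$ be a superlinear function with $f(r)\geq \Delta r+1$ for all $r\in\mathbb{N}$. Then every finite graph $G$ with maximum degree $\Delta$ has a uniform subdivision $\tilde G$ with growth $f_{\tilde G}(r)\leq f(r)$ for every positive integer $r$.
   Context: $\mathbb{N}$ is the set of positive integers. A function $f\colon\mathbb{N}\to\mathbb{R}$ is superlinear if $f(x)/x\to\infty$ as $x\to\infty$. The growth of a finite graph $G$ is the function $f_G\colon\mathbb{N}\to\mathbb{N}$ where $f_G(r)$ is the maximum of $|V(H)|$ over all subgraphs $H$ of $G$ of radius at most $r$. A subdivision of $G$ is a graph obtained by replacing each edge $vw$ by a path $P_{vw}$ with endpoints $v$ and $w$, internally disjoint from the rest of the graph; it is uniform if all the paths $P_{vw}$ have the same length. *)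

theory Defs
  imports Complex_Main
begin

definition graph :: "'a set \<Rightarrow> ('a \<Rightarrow> 'a \<Rightarrow> bool) \<Rightarrow> bool" where
  "graph V E \<longleftrightarrow> finite V \<and> (\<forall>x y. E x y \<longrightarrow> x \<in> V \<and> y \<in> V \<and> x \<noteq> y \<and> E y x)"

definition degree :: "'a set \<Rightarrow> ('a \<Rightarrow> 'a \<Rightarrow> bool) \<Rightarrow> 'a \<Rightarrow> nat" where
  "degree V E v = card {w \<in> V. E v w}"

definition max_degree_is :: "'a set \<Rightarrow> ('a \<Rightarrow> 'a \<Rightarrow> bool) \<Rightarrow> nat \<Rightarrow> bool" where
  "max_degree_is V E D \<longleftrightarrow> (\<forall>v\<in>V. degree V E v \<le> D) \<and> (\<exists>v\<in>V. degree V E v = D)"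

definition walk :: "('a \<Rightarrow> 'a \<Rightarrow> bool) \<Rightarrow> 'a list \<Rightarrow> bool" where
  "walk E p \<longleftrightarrow> p \<noteq> [] \<and> (\<forall>i. Suc i < length p \<longrightarrow> E (p ! i) (p ! Suc i))"

definition dist_le :: "('a \<Rightarrow> 'a \<Rightarrow> bool) \<Rightarrow> 'a \<Rightarrow> 'a \<Rightarrow> nat \<Rightarrow> bool" where
  "dist_le E x y n \<longleftrightarrow> (\<exists>p. walk E p \<and> hd p = x \<and> last p = y \<and> length p \<le> Suc n)"

definition subgraph :: "'a set \<Rightarrow> ('a \<Rightarrow> 'a \<Rightarrow> bool) \<Rightarrow> 'a set \<Rightarrow> ('a \<Rightarrow> 'a \<Rightarrow> bool) \<Rightarrow> bool" where
  "subgraph W F V E \<longleftrightarrow> W \<subseteq> V \<and> (\<forall>x y. F x y \<longrightarrow> E x y \<and> x \<in> W \<and> y \<in> W \<and> F y x)"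

definition radius_le :: "'a set \<Rightarrow> ('a \<Rightarrow> 'a \<Rightarrow> bool) \<Rightarrow> nat \<Rightarrow> bool" where
  "radius_le W F r \<longleftrightarrow> (\<exists>c\<in>W. \<forall>x\<in>W. dist_le F c x r)"

definition growth :: "'a set \<Rightarrow> ('a \<Rightarrow> 'a \<Rightarrow> bool) \<Rightarrow> nat \<Rightarrow> nat" where
  "growth V E r = Max {card W | W F. subgraph W F V E \<and> radius_le W F r}"

text \<open>(VH,EH) is the subdivision of (V,E) in which every edge vw is replaced by a
path P v w of length k (k+1 vertices) from phi v to phi w; the paths are internally
disjoint from each other and from the branch vertices, and H consists exactly of
the branch vertices and the paths.\<close>
definition uniform_subdivision ::
  "'a set \<Rightarrow> ('a \<Rightarrow> 'a \<Rightarrow> bool) \<Rightarrow> 'b set \<Rightarrow> ('b \<Rightarrow> 'b \<Rightarrow> bool) \<Rightarrow> nat \<Rightarrow> bool" where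
  "uniform_subdivision V E VH EH k \<longleftrightarrow>
     (\<exists>(\<phi>::'a \<Rightarrow> 'b) (P::'a \<Rightarrow> 'a \<Rightarrow> 'b list).
        inj_on \<phi> V \<and>
        (\<forall>v w. E v w \<longrightarrow> length (P v w) = Suc k \<and> hd (P v w) = \<phi> v \<and> last (P v w) = \<phi> w
              \<and> distinct (P v w) \<and> P w v = rev (P v w)) \<and>
        VH = \<phi> ` V \<union> \<Union>{set (P v w) | v w. E v w} \<and>
        (\<forall>x y. EH x y \<longleftrightarrow> (\<exists>v w i. E v w \<and> i < k \<and> x = P v w ! i \<and> y = P v w ! Suc i)) \<and>
        (\<forall>v w v' w' i j. E v w \<and> E v' w' \<and> 0 < i \<and> i < k \<and> 0 < j \<and> j < k \<and>
              P v w ! i = P v' w' ! j \<longrightarrow> (v = v' \<and> w = w') \<or> (v = w' \<and> w = v')) \<and>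
        (\<forall>v w i x. E v w \<and> 0 < i \<and> i < k \<and> x \<in> V \<longrightarrow> P v w ! i \<noteq> \<phi> x))"

definition superlinear :: "(nat \<Rightarrow> real) \<Rightarrow> bool" where
  "superlinear f \<longleftrightarrow> filterlim (\<lambda>x. f x / real x) at_top at_top"

end

theory Submission
  imports Defs
begin

lemma dist_le_mono:
  assumes "\<And>x y. F x y \<Longrightarrow> G x y" "dist_le F c x r"
  shows "dist_le G c x r"
  using assms unfolding dist_le_def walk_def by blast

lemma walk_invariant:
  assumes "walk G p" "Q 0 (hd p)"
    and "\<And>j x y. Suc j < length p \<Longrightarrow> Q j x \<Longrightarrow> G x y \<Longrightarrow> Q (Suc j) y"
  shows "\<forall>j<length p. Q j (p ! j)"
proof (intro allI impI)
  fix j assume "j < length p"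
  then show "Q j (p ! j)"
  proof (induction j)
    case 0
    then show ?case using assms(1,2) by (simp add: walk_def hd_conv_nth)
  next
    case (Suc j)
    then have "Q j (p ! j)" by simp
    moreover have "G (p ! j) (p ! Suc j)" using assms(1) Suc.prems by (simp add: walk_def)
    ultimately show ?case using assms(3) Suc.prems by blast
  qed
qed

lemma growth_le:
  assumes fin: "finite VH" and ne: "VH \<noteq> {}"
    and ball: "\<And>c. c \<in> VH \<Longrightarrow> card ({x. dist_le EH c x r} \<inter> VH) \<le> B"
  shows "growth VH EH r \<le> B"
proof -
  let ?S = "{card W | W F. subgraph W F VH EH \<and> radius_le W F r}"
  have "?S \<subseteq> {..card VH}"
    using fin by (auto simp: subgraph_def intro: card_mono)
  then have finS: "finite ?S" using finite_subset by blast
  obtain c where c: "c \<in> VH" using ne by blast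
  have "subgraph {c} (\<lambda>_ _. False) VH EH" using c by (simp add: subgraph_def)
  moreover have "radius_le {c} (\<lambda>_ _. False) r"
    unfolding radius_le_def dist_le_def
    by (intro bexI[of _ c] ballI exI[of _ "[c]"]) (auto simp: walk_def)
  ultimately have neS: "?S \<noteq> {}" by blast
  have "\<forall>n\<in>?S. n \<le> B"
  proof
    fix n assume "n \<in> ?S"
    then obtain W F where n: "n = card W" and sg: "subgraph W F VH EH" and rad: "radius_le W F r" by blast
    from rad obtain c where c: "c \<in> W" and cx: "\<forall>x\<in>W. dist_le F c x r" by (auto simp: radius_le_def)
    have FE: "\<And>x y. F x y \<Longrightarrow> EH x y" using sg by (simp add: subgraph_def)
    have "W \<subseteq> {x. dist_le EH c x r} \<inter> VH"
      using cx sg dist_le_mono[of F EH, OF FE] by (auto simp: subgraph_def)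
    then have "card W \<le> card ({x. dist_le EH c x r} \<inter> VH)"
      using fin by (intro card_mono) auto
    also have "\<dots> \<le> B" using ball c sg by (auto simp: subgraph_def)
    finally show "n \<le> B" using n by simp
  qed
  then show ?thesis unfolding growth_def using finS neS by simp
qed


locale sd =
  fixes V :: "'a set" and E :: "'a \<Rightarrow> 'a \<Rightarrow> bool" and g :: "'a \<Rightarrow> nat" and k :: nat
  assumes G: "graph V E" and ginj: "inj_on g V" and kpos: "0 < k"
begin

definition node :: "'a \<Rightarrow> 'a \<Rightarrow> nat \<Rightarrow> 'a \<times> 'a \<times> nat" where
  "node u w t = (if t = 0 then (u,u,0) else if t = k then (w,w,0)
     else if g u < g w then (u,w,t) else (w,u,k-t))"

definition P :: "'a \<Rightarrow> 'a \<Rightarrow> ('a \<times> 'a \<times> nat) list" where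
  "P u w = map (node u w) [0..<Suc k]"

definition VH :: "('a \<times> 'a \<times> nat) set" where
  "VH = (\<lambda>v. (v,v,0)) ` V \<union> \<Union>{set (P v w) | v w. E v w}"

definition EH :: "('a \<times> 'a \<times> nat) \<Rightarrow> ('a \<times> 'a \<times> nat) \<Rightarrow> bool" where
  "EH x y \<longleftrightarrow> (\<exists>v w i. E v w \<and> i < k \<and> x = P v w ! i \<and> y = P v w ! Suc i)"

lemma Ep: assumes "E u w" shows "u \<in> V" "w \<in> V" "u \<noteq> w" "E w u" "g u \<noteq> g w"
proof -
  show "u \<in> V" "w \<in> V" "u \<noteq> w" "E w u" using G assms by (auto simp: graph_def)
  then show "g u \<noteq> g w" using ginj by (auto dest: inj_onD)
qed

lemma finV: "finite V" using G by (simp add: graph_def)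

lemma P_nth: "i \<le> k \<Longrightarrow> P u w ! i = node u w i"
  unfolding P_def by (simp del: upt_Suc add: nth_map_upt)

lemma P_len: "length (P u w) = Suc k" by (simp add: P_def)

lemma node0: "node u w 0 = (u,u,0)" by (simp add: node_def)
lemma nodek: "node u w k = (w,w,0)" using kpos by (simp add: node_def)

lemma node_rev: assumes "E u w" "i \<le> k" shows "node w u i = node u w (k - i)"
  using Ep[OF assms(1)] assms(2) kpos by (auto simp: node_def)

lemma node_inner: assumes "E u w" "0 < t" "t < k"
  shows "\<exists>a b. a \<noteq> b \<and> node u w t = (a,b,if g u < g w then t else k - t) \<and> {a,b} = {u,w}"
  using Ep[OF assms(1)] assms(2,3) by (auto simp: node_def)

lemma node_inj: assumes "E u w" "i \<le> k" "j \<le> k" "node u w i = node u w j" shows "i = j"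
  using Ep[OF assms(1)] assms kpos unfolding node_def by (auto split: if_splits)

lemma node_id: assumes "E u w" "E v z" "i \<le> k" "node u w t = node v z i" "0 < t" "t < k"
  shows "0 < i \<and> i < k \<and> ((v = u \<and> z = w \<and> i = t) \<or> (v = w \<and> z = u \<and> i = k - t))"
  using Ep[OF assms(1)] Ep[OF assms(2)] assms kpos unfolding node_def by (auto split: if_splits)

lemma node_id0: assumes "E v z" "i \<le> k" "node v z i = (u,u,0)"
  shows "(i = 0 \<and> v = u) \<or> (i = k \<and> z = u)"
  using Ep[OF assms(1)] assms kpos unfolding node_def by (auto split: if_splits)

lemma EH_iff: "EH x y \<longleftrightarrow> (\<exists>v z i. E v z \<and> i < k \<and> x = node v z i \<and> y = node v z (Suc i))"
  unfolding EH_def using P_nth by (metis Suc_leI less_imp_le_nat)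

lemma node_in: assumes "E u w" "t \<le> k" shows "node u w t \<in> V \<times> V \<times> {0..k}"
  using Ep[OF assms(1)] assms(2) by (auto simp: node_def)

lemma set_P: "set (P u w) = node u w ` {0..k}"
  unfolding P_def by (simp del: upt_Suc add: atLeastLessThanSuc_atLeastAtMost)

lemma VH_alt: "VH = (\<lambda>v. (v,v,0)) ` V \<union> {node v w i | v w i. E v w \<and> i \<le> k}"
  proof -
  have "\<Union>{node v w ` {0..k} | v w. E v w} = {node v w i | v w i. E v w \<and> i \<le> k}"
  proof (rule equalityI; rule subsetI)
    fix x assume "x \<in> \<Union>{node v w ` {0..k} | v w. E v w}"
    then obtain v w i where "E v w" "i \<le> k" "x = node v w i" by auto
    then show "x \<in> {node v w i | v w i. E v w \<and> i \<le> k}" by blast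
  next
    fix x assume "x \<in> {node v w i | v w i. E v w \<and> i \<le> k}"
    then obtain v w i where "E v w" "i \<le> k" "x = node v w i" by auto
    then have "x \<in> node v w ` {0..k}" by auto
    then show "x \<in> \<Union>{node v w ` {0..k} | v w. E v w}" using \<open>E v w\<close> by blast
  qed
  then show ?thesis unfolding VH_def set_P by simp
qed

lemma VH_sub: "VH \<subseteq> V \<times> V \<times> {0..k}"
  unfolding VH_alt using node_in by fastforce

lemma finVH: "finite VH"
  by (rule finite_subset[OF VH_sub]) (simp add: finV)

lemma subdiv: "uniform_subdivision V E VH EH k"
  unfolding uniform_subdivision_def
proof (intro exI[of _ "\<lambda>v. (v,v,0)"] exI[of _ P] conjI allI impI)
  show "inj_on (\<lambda>v. (v, v, 0::nat)) V" by (auto simp: inj_on_def)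
  fix v w assume e: "E v w"
  show "length (P v w) = Suc k" by (simp add: P_len)
  have ne: "P v w \<noteq> []" using P_len[of v w] by auto
  show "hd (P v w) = (v, v, 0)" using P_nth[of 0 v w] by (simp add: hd_conv_nth[OF ne] node0)
  show "last (P v w) = (w, w, 0)" using P_nth[of k v w] by (simp add: last_conv_nth[OF ne] P_len nodek)
  show "distinct (P v w)" unfolding P_def distinct_map
    using node_inj[OF e] by (auto simp: inj_on_def simp del: upt_Suc)
  show "P w v = rev (P v w)"
    by (rule nth_equalityI) (auto simp: P_len rev_nth P_nth node_rev[OF e])
next
  show "VH = (\<lambda>v. (v, v, 0)) ` V \<union> \<Union> {set (P v w) |v w. E v w}" by (simp add: VH_def)
next
  fix x y show "EH x y = (\<exists>v w i. E v w \<and> i < k \<and> x = P v w ! i \<and> y = P v w ! Suc i)"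
    by (simp add: EH_def)
next
  fix v w v' w' i j
  assume a: "E v w \<and> E v' w' \<and> 0 < i \<and> i < k \<and> 0 < j \<and> j < k \<and> P v w ! i = P v' w' ! j"
  then have "node v w i = node v' w' j" using P_nth[of i v w] P_nth[of j v' w'] by simp
  then show "v = v' \<and> w = w' \<or> v = w' \<and> w = v'" using node_id[of v w v' w' j i] a by auto
next
  fix v w i x assume a: "E v w \<and> 0 < i \<and> i < k \<and> x \<in> V"
  then show "P v w ! i \<noteq> (x, x, 0)" using node_inner[of v w i] by (auto simp: P_nth)
qed

end

context sd begin

definition Aset :: "'a \<Rightarrow> 'a \<Rightarrow> nat \<Rightarrow> nat \<Rightarrow> ('a \<times> 'a \<times> nat) set" where
  "Aset u w s j = node u w ` {s-j..s+j} \<union> (\<Union>w'\<in>{w'. E u w'}. node u w' ` {1..j-s})"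

lemma A_step:
  assumes e: "E u w" and sj: "s + j < k" and x: "x \<in> Aset u w s j" and xy: "EH x y"
  shows "y \<in> Aset u w s (Suc j)"
proof -
  obtain v z i where vz: "E v z" "i < k" "x = node v z i" "y = node v z (Suc i)"
    using xy by (auto simp: EH_iff)
  show ?thesis
  proof (cases "x \<in> node u w ` {s-j..s+j}")
    case True
    then obtain t where t: "s - j \<le> t" "t \<le> s + j" "x = node u w t" by auto
    show ?thesis
    proof (cases "t = 0")
      case True
      then have "node v z i = (u,u,0)" using t vz by (simp add: node0)
      then have "(i = 0 \<and> v = u) \<or> (i = k \<and> z = u)" using node_id0[OF vz(1) less_imp_le[OF vz(2)]] by blast
      then have "i = 0" "v = u" using vz(2) by auto
      moreover have "s \<le> j" using t True by simp
      ultimately have "y \<in> node u z ` {1..Suc j - s}" using vz by auto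
      then show ?thesis unfolding Aset_def using vz(1) \<open>v = u\<close> by blast
    next
      case False
      have "0 < i \<and> i < k \<and> ((v = u \<and> z = w \<and> i = t) \<or> (v = w \<and> z = u \<and> i = k - t))"
        using node_id[OF e vz(1) _ _ _] vz t False sj by simp
      then consider "v = u" "z = w" "i = t" | "v = w" "z = u" "i = k - t" by blast
      then show ?thesis
      proof cases
        case 1
        then have "y \<in> node u w ` {s - Suc j..s + Suc j}" using vz t by auto
        then show ?thesis unfolding Aset_def by blast
      next
        case 2
        then have "y = node u w (k - Suc (k - t))" using vz node_rev[OF e, of "Suc (k-t)"] False
          by simp
        moreover have "k - Suc (k - t) = t - 1" using False t sj by simp
        moreover have "t - 1 \<in> {s - Suc j..s + Suc j}" using t by auto
        ultimately have "y \<in> node u w ` {s - Suc j..s + Suc j}" by simp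
        then show ?thesis unfolding Aset_def by blast
      qed
    qed
  next
    case False
    then obtain w' t where t: "E u w'" "1 \<le> t" "t \<le> j - s" "x = node u w' t"
      using x unfolding Aset_def by auto
    have "0 < i \<and> i < k \<and> ((v = u \<and> z = w' \<and> i = t) \<or> (v = w' \<and> z = u \<and> i = t' ))
       " if "t' = k - t" for t'
      using node_id[OF t(1) vz(1) _ _ _] vz t sj that by simp
    then consider "v = u" "z = w'" "i = t" | "v = w'" "z = u" "i = k - t" by blast
    then show ?thesis
    proof cases
      case 1
      then have "y \<in> node u w' ` {1..Suc j - s}" using vz t by auto
      then show ?thesis unfolding Aset_def using t(1) by blast
    next
      case 2
      then have "y = node u w' (k - Suc (k - t))" using vz node_rev[OF t(1), of "Suc (k-t)"] t
        by simp
      moreover have "k - Suc (k - t) = t - 1" using t sj by simp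
      ultimately have y: "y = node u w' (t - 1)" by simp
      show ?thesis
      proof (cases "t = 1")
        case True
        then have "y = node u w 0" using y by (simp add: node0)
        moreover have "s - Suc j = 0" using t True by simp
        ultimately show ?thesis unfolding Aset_def by auto
      next
        case False
        then have "t - 1 \<in> {1..Suc j - s}" using t by auto
        then have "y \<in> node u w' ` {1..Suc j - s}" using y by simp
        then show ?thesis unfolding Aset_def using t(1) by blast
      qed
    qed
  qed
qed

lemma A_mono: "j \<le> r \<Longrightarrow> Aset u w s j \<subseteq> Aset u w s r"
  unfolding Aset_def by (intro Un_mono UN_mono image_mono) auto

lemma ball_A:
  assumes e: "E u w" and sr: "s + r \<le> k" and d: "dist_le EH (node u w s) x r"
  shows "x \<in> Aset u w s r"
proof -
  obtain p where p: "walk EH p" "hd p = node u w s" "last p = x" "length p \<le> Suc r"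
    using d by (auto simp: dist_le_def)
  have "\<forall>j<length p. p ! j \<in> Aset u w s j"
  proof (rule walk_invariant[OF p(1)])
    show "hd p \<in> Aset u w s 0" using p(2) by (simp add: Aset_def)
  next
    fix j x y assume "Suc j < length p" "x \<in> Aset u w s j" "EH x y"
    then show "y \<in> Aset u w s (Suc j)" using A_step[OF e] sr p(4) by simp
  qed
  moreover have "p \<noteq> []" using p(1) by (simp add: walk_def)
  ultimately have "last p \<in> Aset u w s (length p - 1)" by (simp add: last_conv_nth)
  moreover have "length p - 1 \<le> r" using p(4) by simp
  ultimately show ?thesis using A_mono[of "length p - 1" r u w s] p(3) by blast
qed

end

lemma arith_bound:
  fixes D m s r :: nat
  assumes "D \<ge> 2" "m \<le> D - 1"
  shows "(Suc (s+r) - (s-r)) + m*(r-s) \<le> D*r+1"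
proof -
  have "m*(r-s) \<le> (D-1)*(r-s)" using assms by simp
  moreover have "(Suc (s+r) - (s-r)) + (D-1)*(r-s) \<le> D*r+1"
  proof (cases "s \<le> r")
    case True
    then obtain d where r: "r = s + d" using le_Suc_ex by blast
    obtain e where De: "D = e + 2" using assms(1) by (metis add.commute le_Suc_ex)
    show ?thesis unfolding r De by (simp add: algebra_simps)
  next
    case False
    have "2*r \<le> D*r" using mult_le_mono1[OF assms(1), of r] by simp
    then show ?thesis using False by (simp del: mult_le_cancel2 add: mult_2)
  qed
  ultimately show ?thesis by linarith
qed

context sd begin

lemma nbr_fin: "finite {w'. E u w'}"
  using finV by (rule finite_subset[rotated]) (auto dest: Ep)

lemma nbr_card: "card {w'. E u w'} = degree V E u"
  unfolding degree_def by (rule arg_cong[where f=card]) (auto dest: Ep)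

lemma card_A:
  assumes e: "E u w" and deg: "degree V E u \<le> D" and D2: "D \<ge> 2"
  shows "card (Aset u w s r) \<le> D*r+1"
proof -
  let ?N = "{w'. E u w'}"
  have sub: "Aset u w s r \<subseteq> node u w ` {s-r..s+r} \<union> (\<Union>w'\<in>?N - {w}. node u w' ` {1..r-s})"
  proof
    fix x assume "x \<in> Aset u w s r"
    then consider "x \<in> node u w ` {s-r..s+r}" | w' t where "E u w'" "t \<in> {1..r-s}" "x = node u w' t"
      unfolding Aset_def by blast
    then show "x \<in> node u w ` {s-r..s+r} \<union> (\<Union>w'\<in>?N - {w}. node u w' ` {1..r-s})"
    proof cases
      case 2
      show ?thesis
      proof (cases "w' = w")
        case True
        then have "t \<in> {s-r..s+r}" using 2 by auto
        then show ?thesis using 2 True by blast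
      next
        case False then show ?thesis using 2 by blast
      qed
    qed blast
  qed
  have "card (Aset u w s r) \<le> card (node u w ` {s-r..s+r} \<union> (\<Union>w'\<in>?N - {w}. node u w' ` {1..r-s}))"
    using sub nbr_fin by (intro card_mono) auto
  also have "\<dots> \<le> card (node u w ` {s-r..s+r}) + card (\<Union>w'\<in>?N - {w}. node u w' ` {1..r-s})"
    by (rule card_Un_le)
  also have "card (node u w ` {s-r..s+r}) \<le> Suc (s+r) - (s-r)"
    using card_image_le[of "{s-r..s+r}" "node u w"] by simp
  also have "card (\<Union>w'\<in>?N - {w}. node u w' ` {1..r-s}) \<le> (\<Sum>w'\<in>?N - {w}. card (node u w' ` {1..r-s}))"
    by (rule card_UN_le) (simp add: nbr_fin)
  also have "\<dots> \<le> (\<Sum>w'\<in>?N - {w}. r - s)"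
    by (rule sum_mono) (metis card_atLeastAtMost card_image_le diff_Suc_1 finite_atLeastAtMost)
  also have "\<dots> = card (?N - {w}) * (r - s)" by simp
  finally have "card (Aset u w s r) \<le> (Suc (s+r) - (s-r)) + card (?N - {w}) * (r - s)" by simp
  moreover have "card (?N - {w}) \<le> D - 1"
    using nbr_fin e deg nbr_card[of u] by (simp add: card_Diff_singleton)
  ultimately show ?thesis using arith_bound[OF D2] by (meson le_trans)
qed

lemma isolated_ball:
  assumes iso: "\<And>w. \<not> E v w" and d: "dist_le EH (v,v,0) x r"
  shows "x = (v,v,0)"
proof -
  obtain p where p: "walk EH p" "hd p = (v,v,0)" "last p = x"
    using d by (auto simp: dist_le_def)
  have "\<forall>j<length p. p ! j = (v,v,0)"
  proof (rule walk_invariant[OF p(1)])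
    show "hd p = (v,v,0)" by (rule p(2))
  next
    fix j x y assume "x = (v,v,0)" "EH x y"
    then obtain a b i where ab: "E a b" "i < k" "(v,v,0) = node a b i" by (auto simp: EH_iff)
    then have "(i = 0 \<and> a = v) \<or> (i = k \<and> b = v)" using node_id0[of a b i v] by simp
    then show "y = (v,v,0)" using ab iso Ep[OF ab(1)] by auto
  qed
  moreover have "p \<noteq> []" using p(1) by (simp add: walk_def)
  ultimately show ?thesis using p(3) by (simp add: last_conv_nth)
qed

lemma VH_cases:
  assumes "c \<in> VH"
  shows "(\<exists>v. c = (v,v,0) \<and> (\<forall>w. \<not> E v w)) \<or> (\<exists>u w s. E u w \<and> 2*s \<le> k \<and> c = node u w s)"
proof -
  from assms consider v where "v \<in> V" "c = (v,v,0)" | v w i where "E v w" "i \<le> k" "c = node v w i"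
    unfolding VH_alt by blast
  then show ?thesis
  proof cases
    case 1
    show ?thesis
    proof (cases "\<exists>w. E v w")
      case True
      then obtain w where "E v w" by blast
      then have "E v w \<and> 2*0 \<le> k \<and> c = node v w 0" using 1 by (simp add: node0)
      then show ?thesis by blast
    qed (use 1 in blast)
  next
    case 2
    show ?thesis
    proof (cases "2*i \<le> k")
      case True then show ?thesis using 2 by blast
    next
      case False
      have "c = node w v (k - i)" using 2 node_rev[OF 2(1), of "k-i"] by simp
      moreover have "2*(k-i) \<le> k" using False by simp
      ultimately show ?thesis using Ep(4)[OF 2(1)] by blast
    qed
  qed
qed

lemma ball_bound:
  assumes deg: "\<forall>v\<in>V. degree V E v \<le> D" and D2: "D \<ge> 2" and c: "c \<in> VH" and rk: "2*r < k"
  shows "card ({x. dist_le EH c x r} \<inter> VH) \<le> D*r+1"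
proof -
  from VH_cases[OF c] show ?thesis
  proof (elim disjE exE conjE)
    fix v assume cv: "c = (v,v,0)" and iso: "\<forall>w. \<not> E v w"
    then have "{x. dist_le EH c x r} \<inter> VH \<subseteq> {c}" using isolated_ball[of v] by auto
    then have "card ({x. dist_le EH c x r} \<inter> VH) \<le> 1"
      using card_mono[of "{c}"] by fastforce
    then show ?thesis by simp
  next
    fix u w s assume e: "E u w" and s: "2*s \<le> k" and cs: "c = node u w s"
    have "{x. dist_le EH c x r} \<inter> VH \<subseteq> Aset u w s r" using ball_A[OF e, of s r] s rk cs by auto
    then have "card ({x. dist_le EH c x r} \<inter> VH) \<le> card (Aset u w s r)"
      by (intro card_mono) (auto simp: Aset_def nbr_fin)
    also have "\<dots> \<le> D*r+1" using card_A[OF e _ D2] deg Ep(1)[OF e] by blast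
    finally show ?thesis .
  qed
qed

end

context sd begin

lemma ball_one:
  assumes k1: "k = 1" and deg: "\<forall>v\<in>V. degree V E v \<le> 1" and c: "c \<in> VH"
  shows "card ({x. dist_le EH c x r} \<inter> VH) \<le> 2"
proof -
  have n0: "node a b 0 = (a,a,0)" and n1: "node a b 1 = (b,b,0)" for a b
    using node0[of a b] nodek[of a b] k1 by auto
  obtain v where cv: "c = (v,v,0)"
  proof -
    from c consider v where "c = (v,v,0)" | v w i where "E v w" "i \<le> k" "c = node v w i"
      unfolding VH_alt by blast
    then show ?thesis
    proof cases
      case (2 v w i)
      then have "i = 0 \<or> i = 1" using k1 by auto
      then show ?thesis using 2 n0 n1 that by metis
    qed (use that in blast)
  qed
  let ?B = "insert c ((\<lambda>z. (z,z,0)) ` {z. E v z})"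
  have "{x. dist_le EH c x r} \<subseteq> ?B"
  proof
    fix x assume "x \<in> {x. dist_le EH c x r}"
    then obtain p where p: "walk EH p" "hd p = c" "last p = x"
      by (auto simp: dist_le_def)
    have "\<forall>j<length p. p ! j \<in> ?B"
    proof (rule walk_invariant[OF p(1)])
      show "hd p \<in> ?B" using p(2) by simp
    next
      fix j x y assume xB: "x \<in> ?B" and "EH x y"
      then obtain a b i where ab: "E a b" "i < k" "x = node a b i" "y = node a b (Suc i)"
        by (auto simp: EH_iff)
      then have i0: "i = 0" using k1 by simp
      then have xa: "x = (a,a,0)" and yb: "y = (b,b,0)" using ab n0 n1 by auto
      from xB show "y \<in> ?B"
      proof
        assume "x = c"
        then have "a = v" using xa cv by simp
        then show ?thesis using ab yb by blast
      next
        assume "x \<in> (\<lambda>z. (z,z,0)) ` {z. E v z}"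
        then have "E v a" using xa by auto
        then have "E a v" by (rule Ep(4))
        have "card {w \<in> V. E a w} \<le> Suc 0" using deg Ep(1)[OF ab(1)] by (simp add: degree_def)
        then have "\<forall>x\<in>{w \<in> V. E a w}. \<forall>y\<in>{w \<in> V. E a w}. x = y"
          using card_le_Suc0_iff_eq[of "{w \<in> V. E a w}"] finV by simp
        then have "b = v" using \<open>E a v\<close> ab(1) Ep[OF ab(1)] Ep[OF \<open>E a v\<close>] by blast
        then show ?thesis using yb cv by simp
      qed
    qed
    moreover have "p \<noteq> []" using p(1) by (simp add: walk_def)
    ultimately have "last p \<in> ?B" by (simp add: last_conv_nth)
    then show "x \<in> ?B" using p(3) by simp
  qed
  then have "card ({x. dist_le EH c x r} \<inter> VH) \<le> card ?B"
    using nbr_fin by (intro card_mono) auto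
  also have "\<dots> \<le> Suc (card ((\<lambda>z. (z,z,0::nat)) ` {z. E v z}))"
    by (rule card_insert_le_m1) (simp_all add: nbr_fin)
  also have "\<dots> \<le> Suc (card {z. E v z})" using card_image_le[OF nbr_fin] by simp
  also have "\<dots> \<le> 2"
  proof (cases "v \<in> V")
    case True then show ?thesis using deg nbr_card[of v] by simp
  next
    case False then have "{z. E v z} = {}" using Ep(1) by blast
    then show ?thesis by simp
  qed
  finally show ?thesis .
qed

end

theorem theorem19:
  fixes V :: "'a set" and E :: "'a \<Rightarrow> 'a \<Rightarrow> bool" and D :: nat and f :: "nat \<Rightarrow> real"
  assumes "D > 0"
    and "superlinear f"
    and "\<And>r. r \<ge> 1 \<Longrightarrow> f r \<ge> real D * real r + 1"
    and "graph V E"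
    and "max_degree_is V E D"
  shows "\<exists>(VH :: ('a \<times> 'a \<times> nat) set) EH k. uniform_subdivision V E VH EH k \<and>
           (\<forall>r. r \<ge> 1 \<longrightarrow> real (growth VH EH r) \<le> f r)"
proof -
  have finV: "finite V" using assms(4) by (simp add: graph_def)
  obtain g :: "'a \<Rightarrow> nat" and n where g: "inj_on g V"
    using finite_imp_inj_to_nat_seg[OF finV] by blast
  have deg: "\<forall>v\<in>V. degree V E v \<le> D" and "\<exists>v\<in>V. degree V E v = D"
    using assms(5) by (auto simp: max_degree_is_def)
  then obtain v0 where v0: "v0 \<in> V" by blast
  show ?thesis
  proof (cases "D = 1")
    case True
    interpret S: sd V E g 1 by unfold_locales (use assms(4) g in auto)
    have ne: "S.VH \<noteq> {}" using v0 unfolding S.VH_def by blast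
    have "\<forall>r. r \<ge> 1 \<longrightarrow> real (growth S.VH S.EH r) \<le> f r"
    proof (intro allI impI)
      fix r :: nat assume r: "r \<ge> 1"
      have "growth S.VH S.EH r \<le> 2"
        by (rule growth_le[OF S.finVH ne]) (rule S.ball_one, use deg True in auto)
      then have "real (growth S.VH S.EH r) \<le> 2" by simp
      also have "\<dots> \<le> real D * real r + 1" using r True by simp
      also have "\<dots> \<le> f r" using assms(3) r by simp
      finally show "real (growth S.VH S.EH r) \<le> f r" .
    qed
    then show ?thesis using S.subdiv by blast
  next
    case False
    then have D2: "D \<ge> 2" using assms(1) by simp
    define N where "N = card V * card V"
    have "eventually (\<lambda>x. real (3*N) \<le> f x / real x) at_top"
      using assms(2) unfolding superlinear_def filterlim_at_top by blast
    then obtain R0 where R0: "\<And>x. x \<ge> R0 \<Longrightarrow> real (3*N) \<le> f x / real x"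
      unfolding eventually_at_top_linorder by blast
    define R where "R = max R0 1"
    have R1: "R \<ge> 1" by (simp add: R_def)
    have fR: "real (3*N) * real x \<le> f x" if "x \<ge> R" for x
    proof -
      have "x > 0" using that R1 by simp
      moreover have "real (3*N) \<le> f x / real x" using R0 that by (simp add: R_def)
      ultimately show ?thesis by (simp add: pos_le_divide_eq)
    qed
    interpret S: sd V E g "2*R" by unfold_locales (use assms(4) g R1 in auto)
    have ne: "S.VH \<noteq> {}" using v0 unfolding S.VH_def by blast
    have "\<forall>r. r \<ge> 1 \<longrightarrow> real (growth S.VH S.EH r) \<le> f r"
    proof (intro allI impI)
      fix r :: nat assume r: "r \<ge> 1"
      show "real (growth S.VH S.EH r) \<le> f r"
      proof (cases "r < R")
        case True
        have "growth S.VH S.EH r \<le> D*r+1"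
          by (rule growth_le[OF S.finVH ne]) (rule S.ball_bound, use deg D2 True in auto)
        then have "real (growth S.VH S.EH r) \<le> real D * real r + 1"
          using of_nat_le_iff[of "growth S.VH S.EH r" "D*r+1", where 'a=real] by simp
        also have "\<dots> \<le> f r" using assms(3) r by simp
        finally show ?thesis .
      next
        case False
        have cVH: "card S.VH \<le> N * (2*R+1)"
        proof -
          have "card S.VH \<le> card (V \<times> V \<times> {0..2*R})"
            using S.VH_sub finV by (intro card_mono) auto
          also have "\<dots> = N * (2*R+1)" by (simp add: card_cartesian_product N_def algebra_simps)
          finally show ?thesis .
        qed
        have "growth S.VH S.EH r \<le> card S.VH"
          by (rule growth_le[OF S.finVH ne]) (rule card_mono[OF S.finVH], blast)
        then have "growth S.VH S.EH r \<le> 3 * N * r"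
        proof -
          have "N * (2*R+1) \<le> N * (3*r)" using False R1 by (intro mult_le_mono2) simp
          then show ?thesis using \<open>growth S.VH S.EH r \<le> card S.VH\<close> cVH by simp
        qed
        then have "real (growth S.VH S.EH r) \<le> real (3*N) * real r"
          using of_nat_le_iff[of "growth S.VH S.EH r" "3*N*r", where 'a=real] by simp
        also have "\<dots> \<le> f r" using fR False by simp
        finally show ?thesis .
      qed
    qed
    then show ?thesis using S.subdiv by blast
  qed
qed

end
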